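(* Let $H$ be a hypergraph and let $Y \subseteq \bigcup H$ be dispensable in $H$. Then for every $Z\subseteq \bigcup H$: $Z$ is dispensable in $H$ if and only if $Z$ is dispensable in $H\cup\{Y\}$.
   Context: A hypergraph is a finite set $H$ of nonempty subsets of some finite set; its carrier is $\bigcup H$ (the union of its members), and $H$ is called a hypergraph on $\bigcup H$. The empty family $\emptyset$ is the empty hypergraph. For a family $F$ of sets and a set $Y$, let $F_Y=\{X\in F\mid X\subseteq Y\}$. A hypergraph partition of a hypergraph $H$ is a partition $\{H_1,\dots,H_n\}$ ($n\ge 0$, blocks nonempty) of the set $H$ such that $\{\bigcup H_1,\dots,\bigcup H_n\}$ is a partition of $\bigcup H$. A hypergraph is connected if it has exactly one hypergraph partition (for nonempty $H$: the graph whose vertices are the members of $H$, two being adjacent when they intersect, is connected). A subset $Y$ of $\bigcup H$ is dispensable in $H$ when $H_Y\setminus\{Y\}$ is a connected hypergraph whose carrier is exactly $Y$. *)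

theory Defs
  imports Main "HOL-Library.Disjoint_Sets"
begin

definition hypergraph :: "'a set set \<Rightarrow> bool" where
  "hypergraph H \<longleftrightarrow> finite H \<and> (\<forall>X\<in>H. X \<noteq> {} \<and> finite X)"

definition restr :: "'a set set \<Rightarrow> 'a set \<Rightarrow> 'a set set" where
  "restr F Y = {X \<in> F. X \<subseteq> Y}"

definition hyp_partition :: "'a set set \<Rightarrow> 'a set set set \<Rightarrow> bool" where
  "hyp_partition H P \<longleftrightarrow>
     partition_on H P \<and> inj_on Union P \<and> partition_on (\<Union>H) (Union ` P)"

definition hconnected :: "'a set set \<Rightarrow> bool" where
  "hconnected H \<longleftrightarrow> (\<exists>!P. hyp_partition H P)"

definition dispensable :: "'a set \<Rightarrow> 'a set set \<Rightarrow> bool" where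
  "dispensable Y H \<longleftrightarrow> Y \<subseteq> \<Union>H \<and>
     hconnected (restr H Y - {Y}) \<and> \<Union>(restr H Y - {Y}) = Y"

end

theory Submission
  imports Defs
begin

definition sep :: "'a set set \<Rightarrow> bool" where
  "sep F \<longleftrightarrow> (\<forall>F1\<subseteq>F. \<Union>F1 \<inter> \<Union>(F - F1) = {} \<longrightarrow> F1 = {} \<or> F1 = F)"

lemma hp_empty: "hyp_partition {} P \<longleftrightarrow> P = {}"
  unfolding hyp_partition_def partition_on_def disjoint_def by auto

lemma hp_single:
  assumes "F \<noteq> {}" "\<forall>X\<in>F. X \<noteq> {}"
  shows "hyp_partition F {F}"
  using assms unfolding hyp_partition_def partition_on_def disjoint_def by auto

lemma hp_two:
  assumes "F1 \<subseteq> F" "F1 \<noteq> {}" "F1 \<noteq> F" "\<forall>X\<in>F. X \<noteq> {}"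
    and "\<Union>F1 \<inter> \<Union>(F - F1) = {}"
  shows "hyp_partition F {F1, F - F1}"
proof -
  have n1: "\<Union>F1 \<noteq> {}" using assms by blast
  have n2: "\<Union>(F - F1) \<noteq> {}" using assms by blast
  have d: "F1 \<noteq> F - F1" using assms by blast
  have du: "\<Union>F1 \<noteq> \<Union>(F - F1)" using assms n1 by blast
  show ?thesis unfolding hyp_partition_def partition_on_def disjoint_def
    using assms n1 n2 d du by (auto simp: inj_on_def)
qed

lemma hconn_sep:
  assumes "\<forall>X\<in>F. X \<noteq> {}"
  shows "hconnected F \<longleftrightarrow> sep F"
proof (cases "F = {}")
  case True
  then show ?thesis unfolding hconnected_def sep_def using hp_empty by auto
next
  case ne: False
  show ?thesis
  proof
    assume h: "hconnected F"
    show "sep F" unfolding sep_def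
    proof (intro allI impI)
      fix F1 assume a: "F1 \<subseteq> F" "\<Union>F1 \<inter> \<Union>(F - F1) = {}"
      show "F1 = {} \<or> F1 = F"
      proof (rule ccontr)
        assume "\<not> (F1 = {} \<or> F1 = F)"
        then have "hyp_partition F {F1, F - F1}" using hp_two a assms by blast
        moreover have "hyp_partition F {F}" using hp_single ne assms by blast
        moreover have "{F1, F - F1} \<noteq> {F}" using \<open>\<not> (F1 = {} \<or> F1 = F)\<close> a by blast
        ultimately show False using h unfolding hconnected_def by blast
      qed
    qed
  next
    assume s: "sep F"
    have ex: "hyp_partition F {F}" using hp_single ne assms by blast
    have un: "P = {F}" if hp: "hyp_partition F P" for P
    proof -
      have p: "partition_on F P" and inj: "inj_on Union P"
        and pu: "partition_on (\<Union>F) (Union ` P)" using hp unfolding hyp_partition_def by auto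
      have all: "F1 = F" if F1: "F1 \<in> P" for F1
      proof -
        have sub: "F1 \<subseteq> F" using p F1 unfolding partition_on_def by blast
        have ne1: "F1 \<noteq> {}" using p F1 unfolding partition_on_def by blast
        have rest: "F - F1 = \<Union>(P - {F1})"
        proof -
          have "F = \<Union>P" using p unfolding partition_on_def by blast
          moreover have "\<forall>G\<in>P - {F1}. G \<inter> F1 = {}"
            using p F1 unfolding partition_on_def disjoint_def by blast
          ultimately show ?thesis by blast
        qed
        have "\<Union>F1 \<inter> \<Union>(F - F1) = {}"
        proof -
          have "\<forall>G\<in>P - {F1}. \<Union>G \<inter> \<Union>F1 = {}"
          proof
            fix G assume G: "G \<in> P - {F1}"
            then have "\<Union>G \<noteq> \<Union>F1" using inj F1 unfolding inj_on_def by blast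
            then show "\<Union>G \<inter> \<Union>F1 = {}"
              using pu G F1 unfolding partition_on_def disjoint_def by blast
          qed
          then show ?thesis unfolding rest by blast
        qed
        then show ?thesis using s sub ne1 unfolding sep_def by blast
      qed
      have "P \<noteq> {}" using p ne unfolding partition_on_def by blast
      then show ?thesis using all by blast
    qed
    show "hconnected F" unfolding hconnected_def using ex un by blast
  qed
qed

lemma mono_disj: "\<Union>F \<inter> \<Union>G = {} \<Longrightarrow> F' \<subseteq> F \<Longrightarrow> G' \<subseteq> G \<Longrightarrow> \<Union>F' \<inter> \<Union>G' = {}"
  by blast

lemma sep_insert:
  assumes "B \<subseteq> A" "sep B" "\<Union>B = Y" "Y \<noteq> {}" "Y \<notin> B"
  shows "sep A \<longleftrightarrow> sep (insert Y A)"
proof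
  assume sA: "sep A"
  show "sep (insert Y A)" unfolding sep_def
  proof (intro allI impI)
    fix F1 assume a: "F1 \<subseteq> insert Y A" "\<Union>F1 \<inter> \<Union>(insert Y A - F1) = {}"
    show "F1 = {} \<or> F1 = insert Y A"
    proof (cases "Y \<in> F1")
      case True
      have s1: "F1 \<inter> A \<subseteq> A" by auto
      have "A - (F1 \<inter> A) \<subseteq> insert Y A - F1" by auto
      then have "\<Union>(F1 \<inter> A) \<inter> \<Union>(A - (F1 \<inter> A)) = {}"
        using mono_disj[OF a(2)] by auto
      then have "F1 \<inter> A = {} \<or> F1 \<inter> A = A" using sA s1 unfolding sep_def by blast
      then show ?thesis
      proof
        assume e: "F1 \<inter> A = {}"
        then have f: "F1 = {Y}" using True a(1) by auto
        then have "B \<subseteq> insert Y A - F1" using assms(1,5) by auto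
        then have "Y \<subseteq> \<Union>(insert Y A - F1)" using assms(3) by auto
        moreover have "Y \<subseteq> \<Union>F1" using f by auto
        ultimately have False using a(2) assms(4) by auto
        then show ?thesis ..
      next
        assume "F1 \<inter> A = A"
        then have "F1 = insert Y A" using True a(1) by auto
        then show ?thesis ..
      qed
    next
      case False
      have s1: "F1 \<subseteq> A" using a False by auto
      have "A - F1 \<subseteq> insert Y A - F1" by auto
      then have "\<Union>F1 \<inter> \<Union>(A - F1) = {}" using mono_disj[OF a(2)] by auto
      then have "F1 = {} \<or> F1 = A" using sA s1 unfolding sep_def by blast
      then show ?thesis
      proof
        assume f: "F1 = A"
        have "Y \<subseteq> \<Union>A" using assms(1,3) by auto
        moreover have "Y \<subseteq> \<Union>(insert Y A - F1)" using False by auto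
        ultimately have False using a(2) assms(4) f by auto
        then show ?thesis ..
      qed simp
    qed
  qed
next
  assume sY: "sep (insert Y A)"
  show "sep A" unfolding sep_def
  proof (intro allI impI)
    fix F1 assume a: "F1 \<subseteq> A" "\<Union>F1 \<inter> \<Union>(A - F1) = {}"
    have "B - (B \<inter> F1) \<subseteq> A - F1" using assms(1) by auto
    then have "\<Union>(B \<inter> F1) \<inter> \<Union>(B - (B \<inter> F1)) = {}" using mono_disj[OF a(2)] by auto
    then have "B \<inter> F1 = {} \<or> B \<inter> F1 = B" using assms(2) unfolding sep_def by blast
    then show "F1 = {} \<or> F1 = A"
    proof
      assume bf: "B \<inter> F1 = {}"
      then have "B \<subseteq> A - F1" using assms(1) by auto
      then have yr: "Y \<subseteq> \<Union>(A - F1)" using assms(3) by auto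
      have yn: "Y \<notin> F1"
      proof
        assume "Y \<in> F1"
        then have "Y \<subseteq> \<Union>F1" by auto
        then show False using yr a(2) assms(4) by auto
      qed
      have s1: "F1 \<subseteq> insert Y A" using a by auto
      have "insert Y A - F1 = insert Y (A - F1)" using yn by auto
      then have "\<Union>(insert Y A - F1) = \<Union>(A - F1)" using yr by auto
      then have "\<Union>F1 \<inter> \<Union>(insert Y A - F1) = {}" using a(2) by simp
      then have "F1 = {} \<or> F1 = insert Y A" using sY s1 unfolding sep_def by blast
      then show ?thesis using yn by auto
    next
      assume bf: "B \<inter> F1 = B"
      then have "B \<subseteq> F1" by auto
      then have yf: "Y \<subseteq> \<Union>F1" using assms(3) by auto
      have s1: "insert Y F1 \<subseteq> insert Y A" using a by auto
      have "\<Union>(insert Y F1) = \<Union>F1" using yf by auto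
      moreover have "insert Y A - insert Y F1 \<subseteq> A - F1" by auto
      ultimately have "\<Union>(insert Y F1) \<inter> \<Union>(insert Y A - insert Y F1) = {}"
        using mono_disj[OF a(2)] by auto
      then have "insert Y F1 = {} \<or> insert Y F1 = insert Y A" using sY s1 unfolding sep_def by blast
      then have A1: "A \<subseteq> insert Y F1" by auto
      have "Y \<in> A \<longrightarrow> Y \<in> F1"
      proof
        assume "Y \<in> A"
        show "Y \<in> F1"
        proof (rule ccontr)
          assume "Y \<notin> F1"
          then have "Y \<subseteq> \<Union>(A - F1)" using \<open>Y \<in> A\<close> by auto
          then show False using yf a(2) assms(4) by auto
        qed
      qed
      then have "A \<subseteq> F1" using A1 by auto
      then show ?thesis using a(1) by auto
    qed
  qed
qed

theorem proposition4p2: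
  fixes H :: "'a set set" and Y Z :: "'a set"
  assumes "hypergraph H"
    and "Y \<noteq> {}"
    and "dispensable Y H"
    and "Z \<subseteq> \<Union>H"
  shows "dispensable Z H \<longleftrightarrow> dispensable Z (H \<union> {Y})"
proof -
  have neH: "\<forall>X\<in>H. X \<noteq> {}" using assms(1) unfolding hypergraph_def by blast
  have yH: "Y \<subseteq> \<Union>H" using assms(3) unfolding dispensable_def by blast
  have uH: "\<Union>(H \<union> {Y}) = \<Union>H" using yH by blast
  define B where "B = restr H Y - {Y}"
  have Bc: "hconnected B" and BU: "\<Union>B = Y" using assms(3) unfolding dispensable_def B_def by auto
  have Bne: "\<forall>X\<in>B. X \<noteq> {}" using neH unfolding B_def restr_def by blast
  have sB: "sep B" using Bc hconn_sep[OF Bne] by blast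
  define A where "A = restr H Z - {Z}"
  have Ane: "\<forall>X\<in>A. X \<noteq> {}" using neH unfolding A_def restr_def by blast
  show ?thesis
  proof (cases "Y \<subseteq> Z \<and> Y \<noteq> Z")
    case False
    have "restr (H \<union> {Y}) Z - {Z} = A" using False unfolding A_def restr_def by auto
    then show ?thesis unfolding dispensable_def uH A_def by simp
  next
    case True
    have eq: "restr (H \<union> {Y}) Z - {Z} = insert Y A" using True unfolding A_def restr_def by auto
    have BA: "B \<subseteq> A" using True unfolding A_def B_def restr_def by auto
    have YB: "Y \<notin> B" unfolding B_def by blast
    have UA: "\<Union>(insert Y A) = \<Union>A" using BA BU by blast
    have Ane2: "\<forall>X\<in>insert Y A. X \<noteq> {}" using Ane assms(2) by blast
    have "hconnected A \<longleftrightarrow> hconnected (insert Y A)"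
      using hconn_sep[OF Ane] hconn_sep[OF Ane2] sep_insert[OF BA sB BU assms(2) YB] by blast
    then show ?thesis unfolding dispensable_def uH eq UA A_def[symmetric] by simp
  qed
qed

end
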